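(* Let $S=\langle T,\Pi,C\rangle$ be a state space and let $(A_i,\psi_i)$, $1\le i\le k$, be abstractions of $S$ forming an additive abstraction system. Then $h_{add}(t^1,g)\le OPT(t^1,t^2)+h_{add}(t^2,g)$ for all $t^1,t^2,g\in T$.
   Context: A state space is a weighted directed graph $S=\langle T,\Pi,C\rangle$ where $T$ is a finite set of states, $\Pi\subseteq T\times T$ is a set of directed edges, and $C:\Pi\to\mathbb{N}=\{0,1,2,\dots\}$. A path from $u$ to $v$ is a sequence of edges $\langle\pi^1,\dots,\pi^n\rangle$ with $\pi^j=(u^{j-1},u^j)\in\Pi$, $u^0=u$, $u^n=v$; its cost is $C(\pi)=\sum_j C(\pi^j)$. $OPT(u,v)$ is the minimum cost of a path from $u$ to $v$ in $S$ (minima over empty sets are $+\infty$). An abstract state space is $A_i=\langle T_i,\Pi_i,C_i,R_i\rangle$ with $T_i$ a set of abstract states, $\Pi_i\subseteq T_i\times T_i$, and edge weights $C_i,R_i:\Pi_i\to\mathbb{N}$ (primary and residual cost), extended additively to paths. An abstraction of $S$ is a pair $(A_i,\psi_i)$ with $\psi_i:T\to T_i$ such that (1) for every $(u,v)\in\Pi$, $(\psi_i(u),\psi_i(v))\in\Pi_i$, and (2) for every $\pi=(u,v)\in\Pi$, $C_i(\pi_i)+R_i(\pi_i)\le C(\pi)$ where $\pi_i=(\psi_i(u),\psi_i(v))$. The system is additive if for every $\pi\in\Pi$, $\sum_{i=1}^k C_i(\pi_i)\le C(\pi)$. Define $C^*_i(x,y)=\min\{C_i(\rho):\rho\text{ a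 path from }x\text{ to }y\text{ in }A_i\}$ and $h_{add}(t,g)=\sum_{i=1}^k C^*_i(\psi_i(t),\psi_i(g))$. *)

theory Defs
  imports Main "HOL-Library.Extended_Nat"
begin

fun is_path :: "('v \<times> 'v) set \<Rightarrow> 'v \<Rightarrow> ('v \<times> 'v) list \<Rightarrow> 'v \<Rightarrow> bool" where
  "is_path E u [] v \<longleftrightarrow> u = v"
| "is_path E u (e # es) v \<longleftrightarrow> e \<in> E \<and> fst e = u \<and> is_path E (snd e) es v"

definition path_cost :: "('v \<times> 'v \<Rightarrow> nat) \<Rightarrow> ('v \<times> 'v) list \<Rightarrow> nat" where
  "path_cost C es = sum_list (map C es)"

text \<open>Minimum cost of a path from u to v (infimum over empty set is \<infinity>).\<close>
definition min_cost :: "('v \<times> 'v) set \<Rightarrow> ('v \<times> 'v \<Rightarrow> nat) \<Rightarrow> 'v \<Rightarrow> 'v \<Rightarrow> enat" where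
  "min_cost E C u v = Inf {enat (path_cost C es) | es. is_path E u es v}"

definition OPT :: "('s \<times> 's) set \<Rightarrow> ('s \<times> 's \<Rightarrow> nat) \<Rightarrow> 's \<Rightarrow> 's \<Rightarrow> enat" where
  "OPT Pi C u v = min_cost Pi C u v"

definition Cstar :: "('a \<times> 'a) set \<Rightarrow> ('a \<times> 'a \<Rightarrow> nat) \<Rightarrow> 'a \<Rightarrow> 'a \<Rightarrow> enat" where
  "Cstar Pii Ci x y = min_cost Pii Ci x y"

definition state_space :: "'s set \<Rightarrow> ('s \<times> 's) set \<Rightarrow> bool" where
  "state_space T Pi \<longleftrightarrow> finite T \<and> Pi \<subseteq> T \<times> T"

definition abstract_state_space :: "'a set \<Rightarrow> ('a \<times> 'a) set \<Rightarrow> bool" where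
  "abstract_state_space Ti Pii \<longleftrightarrow> Pii \<subseteq> Ti \<times> Ti"

definition abstraction ::
  "'s set \<Rightarrow> ('s \<times> 's) set \<Rightarrow> ('s \<times> 's \<Rightarrow> nat) \<Rightarrow>
   'a set \<Rightarrow> ('a \<times> 'a) set \<Rightarrow> ('a \<times> 'a \<Rightarrow> nat) \<Rightarrow> ('a \<times> 'a \<Rightarrow> nat) \<Rightarrow> ('s \<Rightarrow> 'a) \<Rightarrow> bool" where
  "abstraction T Pi C Ti Pii Ci Ri psi \<longleftrightarrow>
     abstract_state_space Ti Pii \<and> psi ` T \<subseteq> Ti \<and>
     (\<forall>(u, v) \<in> Pi. (psi u, psi v) \<in> Pii) \<and>
     (\<forall>(u, v) \<in> Pi. Ci (psi u, psi v) + Ri (psi u, psi v) \<le> C (u, v))"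

definition additive ::
  "nat \<Rightarrow> ('s \<times> 's) set \<Rightarrow> ('s \<times> 's \<Rightarrow> nat) \<Rightarrow> (nat \<Rightarrow> 'a \<times> 'a \<Rightarrow> nat) \<Rightarrow> (nat \<Rightarrow> 's \<Rightarrow> 'a) \<Rightarrow> bool" where
  "additive k Pi C Cs psi \<longleftrightarrow>
     (\<forall>(u, v) \<in> Pi. (\<Sum>i = 1..k. Cs i (psi i u, psi i v)) \<le> C (u, v))"

definition h_add ::
  "nat \<Rightarrow> (nat \<Rightarrow> ('a \<times> 'a) set) \<Rightarrow> (nat \<Rightarrow> 'a \<times> 'a \<Rightarrow> nat) \<Rightarrow> (nat \<Rightarrow> 's \<Rightarrow> 'a) \<Rightarrow> 's \<Rightarrow> 's \<Rightarrow> enat" where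
  "h_add k Pis Cs psi t g = (\<Sum>i = 1..k. Cstar (Pis i) (Cs i) (psi i t) (psi i g))"

end

theory Submission
  imports Defs
begin

lemma is_path_append:
  "is_path E u p v \<Longrightarrow> is_path E v q w \<Longrightarrow> is_path E u (p @ q) w"
  by (induction p arbitrary: u) auto

lemma is_path_edges: "is_path E u p v \<Longrightarrow> set p \<subseteq> E"
  by (induction p arbitrary: u) auto

lemma min_cost_le: "is_path E u es v \<Longrightarrow> min_cost E C u v \<le> enat (path_cost C es)"
  unfolding min_cost_def by (rule Inf_lower) blast

lemma min_cost_attained:
  assumes "min_cost E C u v \<noteq> \<infinity>"
  shows "\<exists>es. is_path E u es v \<and> min_cost E C u v = enat (path_cost C es)"
proof -
  let ?A = "{enat (path_cost C es) | es. is_path E u es v}"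
  have ne: "?A \<noteq> {}"
  proof
    assume "?A = {}"
    hence "min_cost E C u v = \<infinity>" unfolding min_cost_def by (metis Inf_empty top_enat_def)
    thus False using assms by simp
  qed
  hence "Inf ?A \<in> ?A" unfolding Inf_enat_def by (auto intro: LeastI)
  hence "\<exists>es. Inf ?A = enat (path_cost C es) \<and> is_path E u es v" by (simp only: mem_Collect_eq)
  then obtain es where es: "Inf ?A = enat (path_cost C es)" "is_path E u es v" by (elim exE conjE)
  show ?thesis
    by (rule exI[of _ es], rule conjI[OF es(2)], unfold min_cost_def, rule es(1))
qed

lemma min_cost_tri:
  assumes "is_path E x p y"
  shows "min_cost E C x z \<le> enat (path_cost C p) + min_cost E C y z"
proof (cases "min_cost E C y z = \<infinity>")
  case True then show ?thesis by simp
next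
  case False
  obtain q where q: "is_path E y q z" "min_cost E C y z = enat (path_cost C q)"
    using min_cost_attained[OF False] by blast
  have "min_cost E C x z \<le> enat (path_cost C (p @ q))"
    by (rule min_cost_le, rule is_path_append[OF assms q(1)])
  thus ?thesis using q(2) by (simp add: path_cost_def)
qed

lemma is_path_map:
  assumes "\<forall>(a, b) \<in> E. (f a, f b) \<in> E'" "is_path E u p v"
  shows "is_path E' (f u) (map (\<lambda>(a, b). (f a, f b)) p) (f v)"
  using assms(2) by (induction p arbitrary: u) (use assms(1) in auto)

lemma sum_path_swap:
  "(\<Sum>i\<in>I. path_cost (Cs i) (map (\<lambda>(a, b). (psi i a, psi i b)) p))
   = sum_list (map (\<lambda>(a, b). \<Sum>i\<in>I. Cs i (psi i a, psi i b)) p)"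
  by (induction p) (auto simp: path_cost_def sum.distrib)

theorem lemma5:
  fixes T :: "'s set" and Pi :: "('s \<times> 's) set" and C :: "'s \<times> 's \<Rightarrow> nat"
    and k :: nat
    and Ts :: "nat \<Rightarrow> 'a set" and Pis :: "nat \<Rightarrow> ('a \<times> 'a) set"
    and Cs Rs :: "nat \<Rightarrow> 'a \<times> 'a \<Rightarrow> nat" and psi :: "nat \<Rightarrow> 's \<Rightarrow> 'a"
  assumes "state_space T Pi"
    and "\<forall>i \<in> {1..k}. abstraction T Pi C (Ts i) (Pis i) (Cs i) (Rs i) (psi i)"
    and "additive k Pi C Cs psi"
    and "t1 \<in> T" and "t2 \<in> T" and "g \<in> T"
  shows "h_add k Pis Cs psi t1 g \<le> OPT Pi C t1 t2 + h_add k Pis Cs psi t2 g"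
proof (cases "OPT Pi C t1 t2 = \<infinity>")
  case True then show ?thesis by simp
next
  case False
  have "min_cost Pi C t1 t2 \<noteq> \<infinity>" using False unfolding OPT_def .
  from min_cost_attained[OF this]
  obtain p where p: "is_path Pi t1 p t2" "OPT Pi C t1 t2 = enat (path_cost C p)"
    unfolding OPT_def by blast
  define pc where "pc i = path_cost (Cs i) (map (\<lambda>(a, b). (psi i a, psi i b)) p)" for i
  have step: "Cstar (Pis i) (Cs i) (psi i t1) (psi i g)
      \<le> enat (pc i) + Cstar (Pis i) (Cs i) (psi i t2) (psi i g)" if "i \<in> {1..k}" for i
  proof -
    have "\<forall>(a, b) \<in> Pi. (psi i a, psi i b) \<in> Pis i"
    proof -
      have "abstraction T Pi C (Ts i) (Pis i) (Cs i) (Rs i) (psi i)" using assms(2) that by blast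
      thus ?thesis unfolding abstraction_def by (elim conjE)
    qed
    from is_path_map[OF this p(1)] show ?thesis
      unfolding Cstar_def pc_def by (rule min_cost_tri)
  qed
  have "(\<Sum>i = 1..k. pc i) \<le> path_cost C p"
  proof -
    have "(\<Sum>i = 1..k. pc i) = sum_list (map (\<lambda>(a, b). \<Sum>i = 1..k. Cs i (psi i a, psi i b)) p)"
      unfolding pc_def by (rule sum_path_swap)
    also have "\<dots> \<le> sum_list (map C p)"
    proof (rule sum_list_mono)
      fix e assume "e \<in> set p"
      hence "e \<in> Pi" using is_path_edges[OF p(1)] by blast
      thus "(\<lambda>(a, b). \<Sum>i = 1..k. Cs i (psi i a, psi i b)) e \<le> C e"
        using assms(3) unfolding additive_def by auto
    qed
    finally show ?thesis by (simp add: path_cost_def)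
  qed
  moreover have e: "(\<Sum>i = 1..k. enat (pc i)) = enat (\<Sum>i = 1..k. pc i)"
    unfolding of_nat_eq_enat[symmetric] by (rule of_nat_sum[symmetric])
  ultimately have le: "(\<Sum>i = 1..k. enat (pc i)) \<le> enat (path_cost C p)"
    by (simp only: e enat_ord_simps)
  have "h_add k Pis Cs psi t1 g \<le> (\<Sum>i = 1..k. enat (pc i) + Cstar (Pis i) (Cs i) (psi i t2) (psi i g))"
    unfolding h_add_def by (rule sum_mono) (rule step)
  also have "\<dots> = (\<Sum>i = 1..k. enat (pc i)) + h_add k Pis Cs psi t2 g"
    unfolding h_add_def by (rule sum.distrib)
  also have "\<dots> \<le> OPT Pi C t1 t2 + h_add k Pis Cs psi t2 g"
    unfolding p(2) by (rule add_right_mono[OF le])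
  finally show ?thesis .
qed

end
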